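(* Let $\mathcal{X}\subset\mathbb{R}^n$ be compact and consider the control-affine system $\bm{x}_{t+1}=\bm{f}(\bm{x}_t)+\bm{g}(\bm{x}_t)\bm{u}_t$ with $\bm{f}\colon\mathcal{X}\to\mathcal{X}$, $\bm{g}\colon\mathcal{X}\to\mathbb{R}^{n\times m}$. Suppose a data set of $N$ trajectories $\tau_n=\{\bm{x}_t^n\}_{t=0}^T$, $n=1,\dots,N$, is generated by an agent applying a stabilizing deterministic policy $\bm{\pi}$ (i.e. $\bm{x}_{t+1}^n=\bm{f}(\bm{x}_t^n)+\bm{g}(\bm{x}_t^n)\bm{\pi}(\bm{x}_t^n)$, zero perturbation covariance). Fix $\beta>0$. If $\bm{f}(\bm{x})\neq\bm{f}(\bm{x}')$ for all $\bm{x},\bm{x}'\in\mathcal{X}$ with $\bm{x}\neq\bm{x}'$, then there exists a (differentiable) function $V$ such that the closed-loop control law $$\hat{\bm{\pi}}(\bm{x})=-\beta\left[\nabla V(\bm{f}(\bm{x}))\,\bm{g}(\bm{x})\right]^\intercal$$ generates the training data, i.e. $\bm{x}_{t+1}^n=\bm{f}(\bm{x}_t^n)+\bm{g}(\bm{x}_t^n)\hat{\bm{\pi}}(\bm{x}_t^n)$ for all $t=0,\dots,T-1$ and $n=1,\dots,N$.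
   Context: $\nabla V$ denotes the gradient of $V$ as a row vector. *)

theory Defs
  imports "HOL-Analysis.Analysis"
begin

text \<open>Gradient of a scalar function on R^n, as a vector (used as a row vector
  via vector-matrix multiplication v*).\<close>
definition grad :: "(real^'n \<Rightarrow> real) \<Rightarrow> real^'n \<Rightarrow> real^'n" where
  "grad V y = (\<chi> i. frechet_derivative V (at y) (axis i 1))"

end

theory Submission
  imports Defs
begin

lemma range_lemma:
  fixes A :: "real^'m^'n" and v :: "real^'m"
  shows "\<exists>w. (A ** transpose A) *v w = A *v v"
proof -
  let ?S = "range (\<lambda>w. (A ** transpose A) *v w)"
  have sub: "subspace ?S"
    by (rule linear_subspace_image) (simp_all add: matrix_vector_mul_linear)
  obtain y z where y: "y \<in> span ?S" and z: "\<And>u. u \<in> span ?S \<Longrightarrow> orthogonal z u"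
    and yz: "A *v v = y + z"
    using orthogonal_subspace_decomp_exists by blast
  have yS: "y \<in> ?S" using y sub by (metis span_eq_iff)
  have e: "\<And>u. z \<bullet> (A *v u) = (transpose A *v z) \<bullet> u"
    by (simp add: dot_lmul_matrix)
  have "orthogonal z ((A ** transpose A) *v z)" using z by (simp add: span_base)
  hence "z \<bullet> (A *v (transpose A *v z)) = 0"
    by (simp add: orthogonal_def matrix_vector_mul_assoc[symmetric] del: transpose_matrix_vector)
  hence "(transpose A *v z) \<bullet> (transpose A *v z) = 0"
    by (simp only: e)
  hence tz: "transpose A *v z = 0" by (simp only: inner_eq_zero_iff)
  have "z \<bullet> (A *v v) = 0"
    by (simp only: e tz inner_zero_left)
  moreover have "z \<bullet> y = 0" using z y by (simp add: orthogonal_def inner_commute)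
  ultimately have "z \<bullet> z = 0" by (simp add: yz inner_add_right)
  hence "z = 0" by simp
  thus ?thesis using yS yz by auto
qed

lemma sq_zero_deriv:
  fixes F :: "real^'n \<Rightarrow> real" and r :: "real^'n"
  assumes "F differentiable (at r)"
  shows "((\<lambda>y. F y * ((y - r) \<bullet> (y - r))) has_derivative (\<lambda>h. 0)) (at r)"
proof -
  obtain F' where F: "(F has_derivative F') (at r)" using assms differentiable_def by blast
  show ?thesis
    by (rule has_derivative_eq_rhs, (auto intro!: derivative_eq_intros F)[1]) simp
qed

lemma interp:
  fixes Q :: "(real^'n) set" and w :: "real^'n \<Rightarrow> real^'n"
  assumes fin: "finite Q"
  shows "\<exists>V. (\<forall>y. V differentiable (at y)) \<and> (\<forall>q\<in>Q. grad V q = w q)"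
proof -
  define sq where "sq p y = (y - p) \<bullet> (y - p)" for p y :: "real^'n"
  define c where "c q = (\<Prod>p\<in>Q-{q}. sq p q)" for q
  define Vi where "Vi q y = (w q \<bullet> (y - q)) * (\<Prod>p\<in>Q-{q}. sq p y) * inverse (c q)" for q y
  define V where "V y = (\<Sum>q\<in>Q. Vi q y)" for y
  have dprod: "(\<lambda>y. \<Prod>p\<in>S. sq p y) differentiable (at z)" for S z
    unfolding differentiable_def sq_def
    by (rule exI, rule has_derivative_prod, auto intro!: derivative_eq_intros)
  have dVi: "Vi q differentiable (at z)" for q z
    unfolding Vi_def[abs_def] using dprod
    by (intro differentiable_mult differentiable_inner) auto
  have dV: "V differentiable (at z)" for z
    unfolding V_def[abs_def] using dVi fin by (intro differentiable_sum) auto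
  have cpos: "c q \<noteq> 0" if "q \<in> Q" for q
    unfolding c_def sq_def using fin by simp
  have D1: "(Vi r has_derivative (\<lambda>h. w r \<bullet> h)) (at r)" if "r \<in> Q" for r
  proof -
    define G where "G y = (\<Prod>p\<in>Q-{r}. sq p y) * inverse (c r)" for y
    have G1: "G r = 1" unfolding G_def c_def using cpos[OF that] c_def by simp
    have "G differentiable (at r)" unfolding G_def[abs_def] using dprod
      by (intro differentiable_mult) auto
    then obtain G' where G': "(G has_derivative G') (at r)"
      unfolding differentiable_def by blast
    have "Vi r = (\<lambda>y. (w r \<bullet> (y - r)) * G y)" unfolding Vi_def G_def by auto
    moreover have "((\<lambda>y. (w r \<bullet> (y - r)) * G y) has_derivative (\<lambda>h. w r \<bullet> h)) (at r)"
      by (rule has_derivative_eq_rhs, (auto intro!: derivative_eq_intros G')[1]) (simp add: G1)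
    ultimately show ?thesis by simp
  qed
  have D0: "(Vi q has_derivative (\<lambda>h. 0)) (at r)" if "r \<in> Q" "q \<in> Q" "q \<noteq> r" for q r
  proof -
    define F where "F y = (w q \<bullet> (y - q)) * (\<Prod>p\<in>Q-{q}-{r}. sq p y) * inverse (c q)" for y
    have "Vi q = (\<lambda>y. F y * ((y - r) \<bullet> (y - r)))"
    proof
      fix y
      have "(\<Prod>p\<in>Q-{q}. sq p y) = sq r y * (\<Prod>p\<in>Q-{q}-{r}. sq p y)"
        using that fin by (subst prod.remove[of _ r]) auto
      thus "Vi q y = F y * ((y - r) \<bullet> (y - r))" unfolding Vi_def F_def sq_def by simp
    qed
    moreover have "F differentiable (at r)" unfolding F_def[abs_def] using dprod
      by (intro differentiable_mult differentiable_inner) auto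
    ultimately show ?thesis using sq_zero_deriv[of F r] by simp
  qed
  have DV: "(V has_derivative (\<lambda>h. w r \<bullet> h)) (at r)" if "r \<in> Q" for r
  proof -
    have "(V has_derivative (\<lambda>h. \<Sum>q\<in>Q. (if q = r then w r \<bullet> h else 0))) (at r)"
      unfolding V_def[abs_def]
    proof (rule has_derivative_sum)
      fix q assume "q \<in> Q"
      show "(Vi q has_derivative (\<lambda>h. if q = r then w r \<bullet> h else 0)) (at r)"
        using D1[OF that] D0[OF that \<open>q \<in> Q\<close>] by (cases "q = r") simp_all
    qed
    thus ?thesis using fin that by simp
  qed
  have "grad V r = w r" if "r \<in> Q" for r
    using frechet_derivative_at[OF DV[OF that], symmetric]
    by (simp add: grad_def vec_eq_iff inner_axis)
  thus ?thesis using dV by blast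
qed


theorem theorem1:
  fixes X :: "(real^'n) set"
    and f :: "real^'n \<Rightarrow> real^'n"
    and g :: "real^'n \<Rightarrow> real^'m^'n"
    and \<pi> :: "real^'n \<Rightarrow> real^'m"
    and x :: "nat \<Rightarrow> nat \<Rightarrow> real^'n"
    and N T :: nat
    and \<beta> :: real
  assumes "compact X"
    and "f ` X \<subseteq> X"
    and "\<And>k t. k \<in> {1..N} \<Longrightarrow> t \<le> T \<Longrightarrow> x k t \<in> X"
    and "\<And>k t. k \<in> {1..N} \<Longrightarrow> t < T \<Longrightarrow>
           x k (t + 1) = f (x k t) + g (x k t) *v \<pi> (x k t)"
    and "\<beta> > 0"
    and "\<And>y y'. y \<in> X \<Longrightarrow> y' \<in> X \<Longrightarrow> y \<noteq> y' \<Longrightarrow> f y \<noteq> f y'"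
  shows "\<exists>V :: real^'n \<Rightarrow> real. (\<forall>y. V differentiable (at y)) \<and>
           (\<forall>k \<in> {1..N}. \<forall>t < T.
              x k (t + 1) = f (x k t) + g (x k t) *v
                 (- \<beta> *\<^sub>R (grad V (f (x k t)) v* g (x k t))))"
proof -
  have neg: "\<And>(A::real^'m^'n) v. A *v (- v) = - (A *v v)"
    by (metis add_left_cancel matrix_vector_right_distrib add.right_inverse matrix_vector_mult_0_right)
  define P where "P = {x k t | k t. k \<in> {1..N} \<and> t < T}"
  have "P \<subseteq> (\<lambda>(k, t). x k t) ` ({1..N} \<times> {..<T})" unfolding P_def by auto
  hence finP: "finite P" by (rule finite_subset) auto
  have PX: "P \<subseteq> X" unfolding P_def using assms(3) by fastforce
  have injP: "inj_on f P" unfolding inj_on_def using PX assms(6) by blast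
  define wsel where "wsel p = (SOME w. (g p ** transpose (g p)) *v w = g p *v (-(1/\<beta>) *\<^sub>R \<pi> p))" for p
  have hw: "(g p ** transpose (g p)) *v wsel p = g p *v (-(1/\<beta>) *\<^sub>R \<pi> p)" for p
    unfolding wsel_def by (rule someI_ex, rule range_lemma)
  define W where "W q = wsel (inv_into P f q)" for q
  obtain V where dV: "\<forall>y. V differentiable (at y)" and gV: "\<forall>q\<in>f ` P. grad V q = W q"
    using interp[of "f ` P" W] finP by blast
  show ?thesis
  proof (intro exI[of _ V] conjI)
    show "\<forall>y. V differentiable (at y)" by (rule dV)
  next
    show "\<forall>k \<in> {1..N}. \<forall>t < T.
              x k (t + 1) = f (x k t) + g (x k t) *v
                 (- \<beta> *\<^sub>R (grad V (f (x k t)) v* g (x k t)))"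
    proof (intro ballI allI impI)
    fix k t assume k: "k \<in> {1..N}" and t: "t < T"
    define p where "p = x k t"
    have pP: "p \<in> P" unfolding P_def p_def using k t by blast
    have gr: "grad V (f p) = wsel p"
      using gV pP injP by (simp add: W_def inv_into_f_f)
    have "g p *v (- \<beta> *\<^sub>R (wsel p v* g p)) = - \<beta> *\<^sub>R ((g p ** transpose (g p)) *v wsel p)"
      by (simp add: neg matrix_vector_mult_scaleR matrix_vector_mul_assoc[symmetric])
    also have "\<dots> = g p *v \<pi> p"
      using assms(5) by (simp add: hw neg matrix_vector_mult_scaleR)
    finally show "x k (t + 1) = f (x k t) + g (x k t) *v (- \<beta> *\<^sub>R (grad V (f (x k t)) v* g (x k t)))"
      using assms(4)[OF k t] gr by (simp add: p_def)
  qed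
  qed
qed

end
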